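(* Let $K$ be a field containing no $n$-th root of unity other than $1$. Let $A$ be a central simple algebra over $K$ of dimension $n^2$ such that every commutative subalgebra of $A$ other than $K$ is maximal (among commutative subalgebras). Then the group $\mathrm{SL}_1(A)$ is CA.
   Context: $\mathrm{SL}_1(A)$ is the group of elements of $A^\times$ of reduced norm $1$. A group is CA if the centralizer of every non-trivial element is abelian. *)

theory Defs
  imports "Jordan_Normal_Form.Char_Poly"
begin

text \<open>A K-algebra A: a ring_1 type 'a together with a ring homomorphism
  of_K from the field 'k into the centre of 'a. Scalar multiplication c.x is of_K c * x.\<close>

definition K_algebra :: "('k::field \<Rightarrow> 'a::ring_1) \<Rightarrow> bool" where
  "K_algebra of_K \<longleftrightarrow>
     of_K 1 = 1 \<and>
     (\<forall>c d. of_K (c + d) = of_K c + of_K d) \<and>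
     (\<forall>c d. of_K (c * d) = of_K c * of_K d) \<and>
     (\<forall>c x. of_K c * x = x * of_K c)"

definition is_basis :: "('k::field \<Rightarrow> 'a::ring_1) \<Rightarrow> nat \<Rightarrow> (nat \<Rightarrow> 'a) \<Rightarrow> bool" where
  "is_basis of_K N b \<longleftrightarrow>
     (\<forall>x. \<exists>!c. dim_vec c = N \<and> x = (\<Sum>i<N. of_K (c $ i) * b i))"

definition fin_dim :: "('k::field \<Rightarrow> 'a::ring_1) \<Rightarrow> nat \<Rightarrow> bool" where
  "fin_dim of_K N \<longleftrightarrow> (\<exists>b. is_basis of_K N b)"

definition two_sided_ideal :: "'a::ring_1 set \<Rightarrow> bool" where
  "two_sided_ideal I \<longleftrightarrow> 0 \<in> I \<and> (\<forall>x\<in>I. \<forall>y\<in>I. x + y \<in> I) \<and> (\<forall>x\<in>I. - x \<in> I) \<and>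
     (\<forall>x\<in>I. \<forall>r. r * x \<in> I \<and> x * r \<in> I)"

definition central_simple_algebra :: "('k::field \<Rightarrow> 'a::ring_1) \<Rightarrow> nat \<Rightarrow> bool" where
  "central_simple_algebra of_K N \<longleftrightarrow>
     K_algebra of_K \<and> fin_dim of_K N \<and>
     {x. \<forall>y. x * y = y * x} = range of_K \<and>
     (\<forall>I::'a set. two_sided_ideal I \<longrightarrow> I = {0} \<or> I = UNIV)"

definition comm_subalgebra :: "('k::field \<Rightarrow> 'a::ring_1) \<Rightarrow> 'a set \<Rightarrow> bool" where
  "comm_subalgebra of_K S \<longleftrightarrow> range of_K \<subseteq> S \<and>
     (\<forall>x\<in>S. \<forall>y\<in>S. x + y \<in> S \<and> x * y \<in> S \<and> x * y = y * x)"

definition maximal_comm_subalgebra :: "('k::field \<Rightarrow> 'a::ring_1) \<Rightarrow> 'a set \<Rightarrow> bool" where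
  "maximal_comm_subalgebra of_K S \<longleftrightarrow> comm_subalgebra of_K S \<and>
     (\<forall>T. comm_subalgebra of_K T \<longrightarrow> S \<subseteq> T \<longrightarrow> T = S)"

definition coords :: "('k::field \<Rightarrow> 'a::ring_1) \<Rightarrow> nat \<Rightarrow> (nat \<Rightarrow> 'a) \<Rightarrow> 'a \<Rightarrow> 'k vec" where
  "coords of_K N b x = (THE c. dim_vec c = N \<and> x = (\<Sum>i<N. of_K (c $ i) * b i))"

definition lmult_mat :: "('k::field \<Rightarrow> 'a::ring_1) \<Rightarrow> nat \<Rightarrow> 'a \<Rightarrow> 'k mat" where
  "lmult_mat of_K N a =
     (let b = (SOME b. is_basis of_K N b) in
      mat N N (\<lambda>(i, j). coords of_K N b (a * b j) $ i))"

text \<open>Reduced characteristic polynomial of a in a CSA of degree n (dimension n^2):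
  the unique monic polynomial of degree n whose n-th power is the characteristic
  polynomial of left multiplication by a.\<close>
definition red_charpoly :: "('k::field \<Rightarrow> 'a::ring_1) \<Rightarrow> nat \<Rightarrow> 'a \<Rightarrow> 'k poly" where
  "red_charpoly of_K n a =
     (THE p. degree p = n \<and> lead_coeff p = 1 \<and> p ^ n = char_poly (lmult_mat of_K (n^2) a))"

definition red_norm :: "('k::field \<Rightarrow> 'a::ring_1) \<Rightarrow> nat \<Rightarrow> 'a \<Rightarrow> 'k" where
  "red_norm of_K n a = (-1) ^ n * coeff (red_charpoly of_K n a) 0"

definition SL1 :: "('k::field \<Rightarrow> 'a::ring_1) \<Rightarrow> nat \<Rightarrow> 'a set" where
  "SL1 of_K n = {a. (\<exists>u. u * a = 1 \<and> a * u = 1) \<and> red_norm of_K n a = 1}"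

definition centralizer_in :: "'a::monoid_mult set \<Rightarrow> 'a \<Rightarrow> 'a set" where
  "centralizer_in G g = {x \<in> G. x * g = g * x}"

definition CA :: "'a::monoid_mult set \<Rightarrow> bool" where
  "CA G \<longleftrightarrow> (\<forall>g\<in>G. g \<noteq> 1 \<longrightarrow>
      (\<forall>x\<in>centralizer_in G g. \<forall>y\<in>centralizer_in G g. x * y = y * x))"

end

theory Submission
  imports Defs
begin

lemma Kalg_zero:
  assumes "K_algebra of_K" shows "of_K 0 = 0"
proof -
  have "of_K (0+0) = of_K 0 + of_K 0" using assms unfolding K_algebra_def by blast
  then show ?thesis by simp
qed

lemma Kalg_central:
  assumes "K_algebra of_K" shows "of_K c * x = x * of_K c"
  using assms unfolding K_algebra_def by blast

definition dc :: "'a::ring_1 set \<Rightarrow> 'a set" where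
  "dc U = {z. \<forall>w. (\<forall>u\<in>U. w*u = u*w) \<longrightarrow> z*w = w*z}"

lemma dc_comm:
  assumes "\<forall>u\<in>U. \<forall>v\<in>U. u*v = v*u" "z \<in> dc U" "w \<in> dc U"
  shows "z*w = w*z"
proof -
  have "\<forall>u\<in>U. w*u = u*w" using assms(1,3) unfolding dc_def by auto
  then show ?thesis using assms(2) unfolding dc_def by auto
qed

lemma dc_sub: "U \<subseteq> dc U"
  unfolding dc_def by auto

lemma dc_subalg:
  assumes "K_algebra of_K" "\<forall>u\<in>U. \<forall>v\<in>U. u*v = v*u"
  shows "comm_subalgebra of_K (dc U)"
  unfolding comm_subalgebra_def
proof (intro conjI ballI)
  show "range of_K \<subseteq> dc U" using Kalg_central[OF assms(1)] unfolding dc_def by auto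
next
  fix x y assume x: "x \<in> dc U" and y: "y \<in> dc U"
  show "x*y = y*x" using dc_comm[OF assms(2) x y] .
  show "x + y \<in> dc U" using x y unfolding dc_def by (simp add: distrib_left distrib_right)
  show "x * y \<in> dc U" unfolding dc_def
  proof (intro CollectI allI impI)
    fix w assume w: "\<forall>u\<in>U. w*u = u*w"
    have "x*w = w*x" "y*w = w*y" using x y w unfolding dc_def by auto
    then show "x*y*w = w*(x*y)" by (metis mult.assoc)
  qed
qed

lemma central_case:
  fixes of_K :: "'k::field \<Rightarrow> 'a::ring_1"
  assumes Ka: "K_algebra of_K" and fd: "fin_dim of_K (n^2)" and n: "n > 0"
    and rn: "red_norm of_K n (of_K c) = 1"
  shows "c ^ n = 1"
proof -
  define N where "N = n^2"
  define b where "b = (SOME b. is_basis of_K N b)"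
  have bas: "is_basis of_K N b" using fd unfolding fin_dim_def b_def N_def by (metis someI)
  have z: "of_K 0 = 0" by (rule Kalg_zero[OF Ka])
  have co: "coords of_K N b (of_K c * b j) = c \<cdot>\<^sub>v unit_vec N j" if j: "j < N" for j
  proof -
    let ?v = "c \<cdot>\<^sub>v unit_vec N j"
    have "(\<Sum>i<N. of_K (?v $ i) * b i) = (\<Sum>i<N. if i = j then of_K c * b i else 0)"
      by (rule sum.cong) (auto simp: z unit_vec_def)
    also have "\<dots> = of_K c * b j" using j by simp
    finally have P: "dim_vec ?v = N \<and> of_K c * b j = (\<Sum>i<N. of_K (?v $ i) * b i)" by simp
    have U: "\<exists>!v. dim_vec v = N \<and> of_K c * b j = (\<Sum>i<N. of_K (v $ i) * b i)"
      using bas unfolding is_basis_def by blast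
    show ?thesis unfolding coords_def by (rule the1_equality[OF U P])
  qed
  have lm: "lmult_mat of_K N (of_K c) = c \<cdot>\<^sub>m 1\<^sub>m N"
    unfolding lmult_mat_def Let_def b_def[symmetric]
    by (rule eq_matI) (auto simp: co unit_vec_def)
  have cp: "char_poly (c \<cdot>\<^sub>m 1\<^sub>m N) = [:-c,1:]^N"
  proof -
    have "char_poly (c \<cdot>\<^sub>m 1\<^sub>m N) = (\<Prod>a\<leftarrow>diag_mat (c \<cdot>\<^sub>m 1\<^sub>m N). [:- a, 1:])"
      by (rule char_poly_upper_triangular[of _ N]) (auto simp: upper_triangular_def)
    also have "diag_mat (c \<cdot>\<^sub>m 1\<^sub>m N) = replicate N c"
      by (rule nth_equalityI) (auto simp: diag_mat_def)
    finally show ?thesis by (simp add: prod_list_replicate)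
  qed
  let ?q = "[:-c,1:]^n"
  have rc: "red_charpoly of_K n (of_K c) = ?q"
    unfolding red_charpoly_def
  proof (rule the_equality)
    show "degree ?q = n \<and> lead_coeff ?q = 1 \<and> ?q ^ n = char_poly (lmult_mat of_K (n\<^sup>2) (of_K c))"
      using lm cp lead_coeff_power[of "[:-c,1:]" n] degree_linear_power[of c n] unfolding N_def
      by (simp add: degree_linear_power lead_coeff_power power_mult[symmetric] power2_eq_square)
  next
    fix p assume p: "degree p = n \<and> lead_coeff p = 1 \<and> p ^ n = char_poly (lmult_mat of_K (n\<^sup>2) (of_K c))"
    then have pn: "p ^ n = [:-c,1:]^(n*n)" using lm cp unfolding N_def by (simp add: power2_eq_square)
    have p0: "p \<noteq> 0" using p by auto
    have ordpow: "order c (p ^ m) = m * order c p" for m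
    proof (induction m)
      case (Suc m) then show ?case using p0 by (simp add: order_mult)
    qed simp
    have "order c (p ^ n) = n * n" using pn by (simp only: order_power_n_n)
    then have "n * order c p = n * n" using ordpow[of n] by simp
    then have "order c p = n" using n by simp
    then have "?q dvd p" using order_1[of c p] by simp
    then obtain r where r: "p = ?q * r" by (elim dvdE)
    have r0: "r \<noteq> 0" using p0 r by auto
    have "degree p = n + degree r" using r r0 by (simp add: degree_mult_eq degree_linear_power)
    then have dr: "degree r = 0" using p by simp
    have "lead_coeff p = lead_coeff r" using r by (simp add: lead_coeff_mult lead_coeff_power)
    then have "coeff r 0 = 1" using p dr by metis
    then have "r = 1" using dr by (metis degree_0_id one_pCons)
    then show "p = ?q" using r by simp
  qed
  have "coeff ?q 0 = (-c)^n" by (simp add: poly_0_coeff_0[symmetric] poly_power)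
  then have "red_norm of_K n (of_K c) = ((-1) * (-c))^n" unfolding red_norm_def rc
    by (simp only: power_mult_distrib)
  then show ?thesis using rn by simp
qed

theorem proposition2p9:
  fixes of_K :: "'k::field \<Rightarrow> 'a::ring_1" and n :: nat
  assumes no_roots: "\<forall>\<zeta>::'k. \<zeta> ^ n = 1 \<longrightarrow> \<zeta> = 1"
    and csa: "central_simple_algebra of_K (n^2)"
    and maxl: "\<forall>S. comm_subalgebra of_K S \<and> S \<noteq> range of_K \<longrightarrow> maximal_comm_subalgebra of_K S"
  shows "CA (SL1 of_K n)"
  unfolding CA_def
proof (intro ballI impI)
  have Ka: "K_algebra of_K" and fd: "fin_dim of_K (n^2)" using csa unfolding central_simple_algebra_def by auto
  have n: "n > 0"
  proof (rule ccontr)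
    assume "\<not> n > 0" then have "n = 0" by simp
    then have "(0::'k) = 1" using no_roots by auto
    then show False by simp
  qed
  fix g x y assume g: "g \<in> SL1 of_K n" and g1: "g \<noteq> 1"
    and x: "x \<in> centralizer_in (SL1 of_K n) g" and y: "y \<in> centralizer_in (SL1 of_K n) g"
  have xg: "x * g = g * x" and yg: "y * g = g * y" using x y unfolding centralizer_in_def by auto
  have gK: "g \<notin> range of_K"
  proof
    assume "g \<in> range of_K"
    then obtain c where c: "g = of_K c" by auto
    have "red_norm of_K n (of_K c) = 1" using g c unfolding SL1_def by auto
    then have "c ^ n = 1" using central_case[OF Ka fd n] by blast
    then have "c = 1" using no_roots by blast
    then have "g = 1" using c Ka unfolding K_algebra_def by simp
    then show False using g1 by simp
  qed
  define S where "S = dc {g}"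
  have Ssub: "comm_subalgebra of_K S" unfolding S_def by (rule dc_subalg[OF Ka]) simp
  have "g \<in> S" unfolding S_def using dc_sub by blast
  then have "S \<noteq> range of_K" using gK by blast
  then have Smax: "maximal_comm_subalgebra of_K S" using maxl Ssub by blast
  define U where "U = insert x S"
  have xS: "s * x = x * s" if "s \<in> S" for s
    using that xg unfolding S_def dc_def by auto
  have Ucomm: "\<forall>u\<in>U. \<forall>v\<in>U. u*v = v*u"
    using Ssub xS unfolding U_def comm_subalgebra_def by auto
  have "comm_subalgebra of_K (dc U)" by (rule dc_subalg[OF Ka Ucomm])
  moreover have "S \<subseteq> dc U" using dc_sub[of U] unfolding U_def by blast
  ultimately have "dc U = S" using Smax unfolding maximal_comm_subalgebra_def by blast
  then have "x \<in> S" using dc_sub[of U] unfolding U_def by blast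
  then show "x * y = y * x" using yg unfolding S_def dc_def by auto
qed

end
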